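(* For every $\lambda\ge0$ the sequence $\big(\mathbb{E}[e^{-\lambda Z_n}]\big)_{n\ge1}$ is bounded. Moreover, \[ \mathbb{E}[e^{-Z_n}]-1\sim-\frac{\log n}{2n}\quad\text{as } n\to\infty, \] meaning that the ratio of the two sides tends to $1$.
   Context: $Z_n=\frac{T_n}{n}-\log n$, where $T_n=\sum_{i=1}^n\tau_i^n$ with $\tau_1^n,\dots,\tau_n^n$ independent and $\tau_i^n$ geometric on $\{1,2,\dots\}$ with parameter $\frac{n-i+1}{n}$; equivalently $T_n$ is the coupon collector's completion time for $n$ coupons. *)

theory Defs
  imports "HOL-Probability.Probability"
begin

text \<open>Geometric distribution on {1,2,...} with success parameter p (0 < p \<le> 1):
  P(X = k) = (1-p)^(k-1) p for k \<ge> 1. The library geometric_pmf lives on {0,1,...}.\<close>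
definition geom1_pmf :: "real \<Rightarrow> nat pmf" where
  "geom1_pmf p = map_pmf Suc (geometric_pmf p)"

fun indep_sum_pmf :: "nat pmf list \<Rightarrow> nat pmf" where
  "indep_sum_pmf [] = return_pmf 0"
| "indep_sum_pmf (p # ps) = bind_pmf p (\<lambda>x. bind_pmf (indep_sum_pmf ps) (\<lambda>y. return_pmf (x + y)))"

definition coupon_pmf :: "nat \<Rightarrow> nat pmf" where
  "coupon_pmf n = indep_sum_pmf
     (map (\<lambda>i. geom1_pmf ((real n - real i + 1) / real n)) [1..<n+1])"

definition Z :: "nat \<Rightarrow> nat \<Rightarrow> real" where
  "Z n t = real t / real n - ln (real n)"

definition laplace_Z :: "real \<Rightarrow> nat \<Rightarrow> real" where
  "laplace_Z l n = measure_pmf.expectation (coupon_pmf n) (\<lambda>t. exp (- l * Z n t))"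

end

theory Submission
  imports Defs "HOL-Real_Asymp.Real_Asymp" begin
lemma geom_nn:
  assumes p: "0 < p" "p \<le> 1" and s: "0 \<le> s" "s \<le> 1"
  shows "(\<integral>\<^sup>+t. ennreal (s^t) \<partial>geom1_pmf p) = ennreal (p * s / (1 - (1 - p) * s))"
proof -
  have lt: "norm ((1 - p) * s) < 1"
  proof -
    have "(1 - p) * s \<le> (1-p)" using p s by (simp add: mult_left_le)
    moreover have "0 \<le> (1 - p) * s" using p s by simp
    ultimately show ?thesis using p by simp
  qed
  have su: "(\<lambda>k. (1 - p) ^ k * p * s^(Suc k)) sums (p * s / (1 - (1 - p) * s))"
  proof -
    have "(\<lambda>k. (p * s) * ((1 - p) * s)^k) sums ((p * s) * (1/(1-(1 - p) * s)))"
      by (intro sums_mult geometric_sums lt)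
    moreover have "(\<lambda>k. (p * s) * ((1 - p) * s)^k) = (\<lambda>k. (1 - p) ^ k * p * s^(Suc k))"
      by (auto simp: power_mult_distrib)
    ultimately show ?thesis by simp
  qed
  have "(\<integral>\<^sup>+t. ennreal (s^t) \<partial>geom1_pmf p) = (\<integral>\<^sup>+k. ennreal (s^(Suc k)) \<partial>geometric_pmf p)"
    unfolding geom1_pmf_def by (simp add: nn_integral_map_pmf)
  also have "\<dots> = (\<integral>\<^sup>+k. ennreal ((1 - p) ^ k * p * s^(Suc k)) \<partial>count_space UNIV)"
    using p s by (simp add: nn_integral_measure_pmf ennreal_mult'' del: power_Suc)
  also have "\<dots> = (\<Sum>k. ennreal ((1 - p) ^ k * p * s^(Suc k)))"
    by (simp add: nn_integral_count_space_nat)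
  also have "\<dots> = ennreal (p * s / (1 - (1 - p) * s))"
    using su p s by (intro suminf_ennreal_eq) auto
  finally show ?thesis .
qed

lemma indep_nn:
  assumes s: "0 \<le> s" "s \<le> 1" and q: "\<forall>q\<in>set qs. 0 < q \<and> q \<le> 1"
  shows "(\<integral>\<^sup>+t. ennreal (s ^ t) \<partial>indep_sum_pmf (map geom1_pmf qs))
     = ennreal (\<Prod>q\<leftarrow>qs. q * s / (1 - (1 - q) * s))"
  using q
proof (induction qs)
  case Nil
  then show ?case by simp
next
  case (Cons a qs)
  have IH: "(\<integral>\<^sup>+t. ennreal (s ^ t) \<partial>indep_sum_pmf (map geom1_pmf qs))
     = ennreal (\<Prod>q\<leftarrow>qs. q * s / (1 - (1 - q) * s))" using Cons by simp
  have "(\<integral>\<^sup>+t. ennreal (s ^ t) \<partial>indep_sum_pmf (map geom1_pmf (a # qs)))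
     = (\<integral>\<^sup>+x. \<integral>\<^sup>+y. ennreal (s ^ x) * ennreal (s ^ y) \<partial>indep_sum_pmf (map geom1_pmf qs) \<partial>geom1_pmf a)"
    using s by (simp add: power_add ennreal_mult)
  also have "\<dots> = (\<integral>\<^sup>+x. ennreal (s ^ x) * (\<integral>\<^sup>+y. ennreal (s ^ y) \<partial>indep_sum_pmf (map geom1_pmf qs)) \<partial>geom1_pmf a)"
    by (simp add: nn_integral_cmult)
  also have "\<dots> = (\<integral>\<^sup>+x. ennreal (s ^ x) \<partial>geom1_pmf a) * (\<integral>\<^sup>+y. ennreal (s ^ y) \<partial>indep_sum_pmf (map geom1_pmf qs))"
    by (simp add: nn_integral_multc)
  also have "\<dots> = ennreal (a * s / (1 - (1 - a) * s)) * ennreal (\<Prod>q\<leftarrow>qs. q * s / (1 - (1 - q) * s))"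
    using Cons.prems s IH by (simp add: geom_nn)
  also have "\<dots> = ennreal (\<Prod>q\<leftarrow>a # qs. q * s / (1 - (1 - q) * s))"
  proof -
    have "(1 - a) * s \<le> 1 - a" using Cons.prems s by (simp add: mult_left_le)
    hence "0 \<le> a * s / (1 - (1 - a) * s)" using Cons.prems s by simp
    thus ?thesis by (simp add: ennreal_mult'[symmetric])
  qed
  finally show ?case .
qed

lemma geom_term:
  fixes k n s :: real
  assumes "0 < s" "s \<le> 1" "0 < k" "k \<le> n"
  shows "(k / n) * s / (1 - (1 - k / n) * s) = k / (k + n * (1 / s - 1))"
proof -
  have n: "n > 0" using assms by simp
  have "(1 - k / n) * s \<le> 1 - k / n" using assms n by (simp add: mult_left_le)
  moreover have "k / n > 0" using assms n by simp
  ultimately have d: "1 - (1 - k / n) * s > 0" by linarith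
  have "n * s \<le> n" using n assms by (simp add: mult_left_le)
  moreover have "k * s > 0" using assms by simp
  moreover have "k + n * (1 / s - 1) = (k * s + n - n * s) / s" using assms by (simp add: field_simps)
  moreover have "k * s + n - n * s > 0" using calculation by linarith
  ultimately have d2: "k + n * (1 / s - 1) > 0" using assms by simp
  show ?thesis using d d2 n assms by (simp add: field_simps)
qed

lemma laplace_closed:
  assumes n: "n \<ge> 1" and l: "l \<ge> 0"
  shows "laplace_Z l n = exp (l * ln (real n)) *
     (\<Prod>k=1..n. real k / (real k + real n * (exp (l / real n) - 1)))"
proof -
  define s where "s = exp (- l / real n)"
  have s0: "0 < s" and s1: "s \<le> 1" using n l by (auto simp: s_def)
  have 1: "exp (- l * Z n t) = exp (l * ln (real n)) * s ^ t" for t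
  proof -
    have "- l * Z n t = l * ln (real n) + real t * (- l / real n)"
      by (simp add: Z_def algebra_simps)
    moreover have "exp (real t * (- l / real n)) = s ^ t" unfolding s_def by (rule exp_of_nat_mult)
    ultimately show ?thesis by (simp only: exp_add)
  qed
  define h where "h = (\<lambda>k::nat. real k / (real k + real n * (exp (l / real n) - 1)))"
  have qs: "\<forall>q\<in>set (map (\<lambda>i. (real n - real i + 1) / real n) [1..<n+1]). 0 < q \<and> q \<le> 1"
    using n by auto
  have "measure_pmf.expectation (coupon_pmf n) (\<lambda>t. s ^ t)
     = enn2real (\<integral>\<^sup>+t. ennreal (s ^ t) \<partial>coupon_pmf n)"
    using s0 by (intro integral_eq_nn_integral) auto
  also have "\<dots> = (\<Prod>q\<leftarrow>map (\<lambda>i. (real n - real i + 1) / real n) [1..<n+1]. q * s / (1 - (1 - q) * s))"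
  proof -
    have "(\<integral>\<^sup>+t. ennreal (s ^ t) \<partial>coupon_pmf n) = ennreal (\<Prod>q\<leftarrow>map (\<lambda>i. (real n - real i + 1) / real n) [1..<n+1]. q * s / (1 - (1 - q) * s))"
      unfolding coupon_pmf_def using indep_nn[OF _ s1 qs] s0 by (simp add: comp_def del: upt_Suc)
    moreover have "0 \<le> (\<Prod>q\<leftarrow>map (\<lambda>i. (real n - real i + 1) / real n) [1..<n+1]. q * s / (1 - (1 - q) * s))"
    proof (rule prod_list_nonneg)
      fix x assume "x \<in> set (map (\<lambda>q. q * s / (1 - (1 - q) * s)) (map (\<lambda>i. (real n - real i + 1) / real n) [1..<n+1]))"
      then obtain q where "q \<in> set (map (\<lambda>i. (real n - real i + 1) / real n) [1..<n+1])" and x: "x = q * s / (1 - (1 - q) * s)"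
        unfolding set_map[of "\<lambda>q. q * s / (1 - (1 - q) * s)"] by blast
      with qs have q: "0 < q" "q \<le> 1" by blast+
      have "(1 - q) * s \<le> 1 - q" using q s0 s1 by (simp add: mult_left_le)
      thus "0 \<le> x" unfolding x using q s0 by simp
    qed
    ultimately show ?thesis by simp
  qed
  also have "\<dots> = (\<Prod>i=1..n. h (n + 1 - i))"
  proof -
    have "(\<Prod>q\<leftarrow>map (\<lambda>i. (real n - real i + 1) / real n) [1..<n+1]. q * s / (1 - (1 - q) * s))
       = (\<Prod>i\<in>{1..n}. (real n - real i + 1) / real n * s / (1 - (1 - (real n - real i + 1) / real n) * s))"
      by (simp only: map_map comp_def prod.distinct_set_conv_list[symmetric] distinct_upt set_upt)
         (simp add: atLeastLessThanSuc_atLeastAtMost)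
    also have "\<dots> = (\<Prod>i=1..n. h (n + 1 - i))"
    proof (intro prod.cong refl)
      fix i assume i: "i \<in> {1..n}"
      have e: "real (n + 1 - i) = real n - real i + 1" using i by auto
      have "1 / s = exp (l / real n)" by (simp add: s_def exp_minus field_simps)
      thus "(real n - real i + 1) / real n * s / (1 - (1 - (real n - real i + 1) / real n) * s) = h (n + 1 - i)"
        unfolding h_def e using geom_term[OF s0 s1, of "real n - real i + 1" "real n"] i by auto
    qed
    finally show ?thesis .
  qed
  also have "\<dots> = prod h {1..n}"
    by (subst prod.atLeastAtMost_rev) simp
  finally have 2: "measure_pmf.expectation (coupon_pmf n) (\<lambda>t. s ^ t) = prod h {1..n}" .
  show ?thesis
    unfolding laplace_Z_def 1 2[symmetric] h_def[symmetric] by simp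
qed

lemma prod_poch:
  fixes l :: real assumes "l \<ge> 0"
  shows "(\<Prod>k=1..n. real k / (real k + l)) = fact n / pochhammer (l + 1) n"
proof (induction n)
  case 0 then show ?case by simp
next
  case (Suc n)
  have "pochhammer (l + 1) n > 0" using assms by (intro pochhammer_pos) simp
  have q: "real (Suc n) + l > 0" using assms by simp
  have "(\<Prod>k=1..Suc n. real k / (real k + l)) = (\<Prod>k=1..n. real k / (real k + l)) * (real (Suc n) / (real (Suc n) + l))"
    by (simp add: prod.cl_ivl_Suc)
  also have "\<dots> = fact n / pochhammer (l + 1) n * (real (Suc n) / (real (Suc n) + l))"
    using Suc by simp
  also have "\<dots> = (real (Suc n) * fact n) / (pochhammer (l + 1) n * (l + 1 + real n))"
    by (simp add: algebra_simps)
  also have "\<dots> = fact (Suc n) / pochhammer (l + 1) (Suc n)"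
    by (simp add: pochhammer_Suc fact_Suc)
  finally show ?case .
qed

lemma bound_conv:
  fixes l :: real assumes "l \<ge> 0"
  shows "convergent (\<lambda>n. exp (l * ln (real n)) * (fact n / pochhammer (l + 1) n))"
proof -
  have lim: "(\<lambda>n. Gamma_series (l + 1) n * ((l + 1 + real n) / real n)) \<longlonglongrightarrow> Gamma (l + 1) * 1"
  proof (intro tendsto_mult Gamma_series_LIMSEQ)
    show "(\<lambda>n. (l + 1 + real n) / real n) \<longlonglongrightarrow> 1" by real_asymp
  qed
  have ev: "\<forall>\<^sub>F n in sequentially. Gamma_series (l + 1) n * ((l + 1 + real n) / real n)
      = exp (l * ln (real n)) * (fact n / pochhammer (l + 1) n)"
    using eventually_gt_at_top[of "0::nat"]
  proof eventually_elim
    case (elim n)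
    have p: "pochhammer (l + 1) n > 0" using assms by (intro pochhammer_pos) simp
    have "exp ((l + 1) * ln (real n)) = exp (l * ln (real n)) * real n"
      using elim by (simp add: distrib_right exp_add)
    have gen: "F * (E * N) / (P * C) * (C / N) = E * (F / P)" if "N > 0" "P > 0" "C > 0" for F E N P C :: real
      using that by (simp add: field_simps)
    have "Gamma_series (l + 1) n = fact n * (exp (l * ln (real n)) * real n) / (pochhammer (l + 1) n * (l + 1 + real n))"
      unfolding Gamma_series_def by (simp add: pochhammer_Suc \<open>exp ((l + 1) * ln (real n)) = _\<close>)
    then show ?case using elim p assms gen[of "real n" "pochhammer (l + 1) n" "l + 1 + real n"] by simp
  qed
  show ?thesis using tendsto_cong[OF ev] lim by (auto simp: convergent_def)
qed

lemma bseq_part: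
  fixes l :: real assumes l: "l \<ge> 0"
  shows "Bseq (\<lambda>n. laplace_Z l (Suc n))"
proof -
  define b where "b = (\<lambda>n. exp (l * ln (real n)) * (fact n / pochhammer (l + 1) n))"
  have "Bseq b" unfolding b_def using bound_conv[OF l] by (rule convergent_imp_Bseq)
  then obtain K where K: "K > 0" "\<And>n. norm (b n) \<le> K" using BseqD by blast
  have "norm (laplace_Z l (Suc n)) \<le> K" for n
  proof -
    define m where "m = Suc n"
    have m: "m \<ge> 1" by (simp add: m_def)
    define a where "a = real m * (exp (l / real m) - 1)"
    have "real m * (l / real m) \<le> a" unfolding a_def using m
    proof (intro mult_left_mono)
      show "l / real m \<le> exp (l / real m) - 1" using exp_ge_add_one_self[of "l / real m"] by linarith
    qed simp
    hence al: "l \<le> a" using m by simp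
    have P: "0 \<le> (\<Prod>k=1..m. real k / (real k + a))" using al l by (intro prod_nonneg) auto
    have Q: "(\<Prod>k=1..m. real k / (real k + a)) \<le> (\<Prod>k=1..m. real k / (real k + l))"
      using al l by (intro prod_mono) (auto intro!: divide_left_mono mult_pos_pos add_pos_nonneg)
    have "laplace_Z l m = exp (l * ln (real m)) * (\<Prod>k=1..m. real k / (real k + a))"
      using laplace_closed[OF m l] by (simp add: a_def)
    hence "norm (laplace_Z l m) \<le> b m"
      using P Q by (simp add: b_def prod_poch[OF l, symmetric] abs_mult)
    also have "\<dots> \<le> K" using K(2)[of m] by simp
    finally show ?thesis by (simp add: m_def)
  qed
  thus ?thesis using K(1) unfolding Bseq_def by blast
qed

lemma prod_eps:
  fixes e :: real assumes e: "e \<ge> 0"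
  shows "(\<Prod>k=1..n. real k / (real k + 1 + e)) = exp (- (\<Sum>k=1..n. ln (1 + e / (real k + 1)))) / (real n + 1)"
proof (induction n)
  case 0 then show ?case by simp
next
  case (Suc n)
  define S where "S = (\<Sum>k=1..n. ln (1 + e / (real k + 1)))"
  have pos: "1 + e / (real n + 2) > 0" using e by (simp add: add_pos_nonneg)
  have "(\<Prod>k=1..Suc n. real k / (real k + 1 + e)) = (\<Prod>k=1..n. real k / (real k + 1 + e)) * ((real n + 1) / (real n + 2 + e))"
    by (simp add: prod.cl_ivl_Suc add_ac)
  also have "\<dots> = exp (- S) / (real n + 1) * ((real n + 1) / (real n + 2 + e))"
    using Suc by (simp add: S_def)
  also have "\<dots> = exp (- S) / (real n + 2 + e)" by simp
  also have "\<dots> = exp (- S) / ((1 + e / (real n + 2)) * (real n + 2))"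
  proof -
    have "(1 + e / (real n + 2)) * (real n + 2) = real n + 2 + e" by (simp add: field_simps)
    thus ?thesis by simp
  qed
  also have "\<dots> = exp (- S) / (1 + e / (real n + 2)) / (real n + 2)"
    by (simp add: divide_divide_eq_left)
  also have "\<dots> = exp (- (S + ln (1 + e / (real n + 2)))) / (real n + 2)"
    using pos by (simp add: exp_diff exp_minus field_simps)
  also have "\<dots> = exp (- (\<Sum>k=1..Suc n. ln (1 + e / (real k + 1)))) / (real (Suc n) + 1)"
    by (simp add: S_def sum.cl_ivl_Suc add_ac)
  finally show ?case .
qed

lemma harm_sum: "(\<Sum>k=1..n. 1 / (real k + 1)) = harm (Suc n) - 1"
proof (induction n)
  case 0 then show ?case by (simp add: harm_def)
next
  case (Suc n) then show ?case by (simp add: sum.cl_ivl_Suc harm_Suc add_ac inverse_eq_divide)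
qed

lemma harm_upper: "harm (Suc n) \<le> ln (real (Suc n)) + 1"
proof -
  have "harm (Suc n) - ln (real (Suc n)) \<le> harm (Suc 0) - ln (real (Suc 0))"
    by (rule decseqD[OF decseq_harm_diff_ln]) simp
  moreover have "harm (Suc 0) = (1::real)" by (simp add: harm_def)
  ultimately show ?thesis by simp
qed

lemma key_ineq:
  fixes E S SL SU c N :: real
  assumes E: "E = N / (N + 1) * exp (- S)" and N: "N > 0" and c: "c > 0"
    and S: "0 \<le> S" "SL \<le> S" "S \<le> SU"
  shows "SL * c / (1 + SU) \<le> (1 - E) * c" "(1 - E) * c \<le> c / (N + 1) + SU * c"
proof -
  have split: "1 - E = exp (- S) / (N + 1) + (1 - exp (- S))" using E N by (simp add: field_simps)
  have x1: "exp (- S) \<le> 1" using S by simp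
  have x2: "1 - exp (- S) \<le> S" using exp_ge_add_one_self[of "- S"] by linarith
  have x3: "S / (1 + S) \<le> 1 - exp (- S)"
  proof -
    have "1 + S \<le> exp S" by (rule exp_ge_add_one_self)
    hence "exp (- S) \<le> 1 / (1 + S)" using S by (simp add: exp_minus field_simps)
    moreover have "1 - 1 / (1 + S) = S / (1 + S)" using S by (simp add: field_simps)
    ultimately show ?thesis by linarith
  qed
  have p: "exp (- S) / (N + 1) \<ge> 0" using N by simp
  have "SL * c / (1 + SU) \<le> S * c / (1 + SU)"
    using S c by (intro divide_right_mono mult_right_mono) auto
  also have "\<dots> \<le> S * c / (1 + S)"
    using S c by (intro divide_left_mono) (auto intro: mult_pos_pos add_pos_nonneg)
  also have "\<dots> = S / (1 + S) * c" by simp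
  also have "\<dots> \<le> (1 - exp (- S)) * c" using x3 c by (intro mult_right_mono) auto
  also have "\<dots> \<le> (1 - E) * c" using split p c by (intro mult_right_mono) auto
  finally show "SL * c / (1 + SU) \<le> (1 - E) * c" .
  have "(1 - E) * c = exp (- S) / (N + 1) * c + (1 - exp (- S)) * c" unfolding split by (simp add: distrib_right)
  also have "\<dots> \<le> 1 / (N + 1) * c + SU * c"
    using x1 x2 S c N by (intro add_mono mult_right_mono divide_right_mono) auto
  finally show "(1 - E) * c \<le> c / (N + 1) + SU * c" by simp
qed

lemma lim_part: "(\<lambda>n. (laplace_Z 1 n - 1) / (- ln (real n) / (2 * real n))) \<longlonglongrightarrow> 1"
proof -
  define eps where "eps = (\<lambda>n::nat. real n * (exp (1 / real n) - 1) - 1)"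
  define c where "c = (\<lambda>n::nat. 2 * real n / ln (real n))"
  define SL where "SL = (\<lambda>n. eps n * (ln (real n + 2) - 1) - real n * (eps n)^2)"
  define SU where "SU = (\<lambda>n. eps n * ln (real n + 1))"
  define L where "L = (\<lambda>n. SL n * c n / (1 + SU n))"
  define U where "U = (\<lambda>n. c n / (real n + 1) + SU n * c n)"
  have L: "L \<longlonglongrightarrow> 1" unfolding L_def SL_def SU_def c_def eps_def by real_asymp
  have U: "U \<longlonglongrightarrow> 1" unfolding U_def SU_def c_def eps_def by real_asymp
  have ev1: "eventually (\<lambda>n. eps n \<le> 1) sequentially" unfolding eps_def by real_asymp
  have ev: "eventually (\<lambda>n. L n \<le> (laplace_Z 1 n - 1) / (- ln (real n) / (2 * real n))
      \<and> (laplace_Z 1 n - 1) / (- ln (real n) / (2 * real n)) \<le> U n) sequentially"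
    using ev1 eventually_ge_at_top[of "2::nat"]
  proof eventually_elim
    case (elim n)
    have n1: "n \<ge> 1" using elim by simp
    have npos: "real n > 0" using elim by simp
    have e0: "eps n \<ge> 0"
    proof -
      have "real n * (1 / real n) \<le> real n * (exp (1 / real n) - 1)"
      proof (intro mult_left_mono)
        show "1 / real n \<le> exp (1 / real n) - 1" using exp_ge_add_one_self[of "1 / real n"] by linarith
      qed simp
      thus ?thesis using npos by (simp add: eps_def)
    qed
    have e1: "eps n \<le> 1" using elim by simp
    define S where "S = (\<Sum>k=1..n. ln (1 + eps n / (real k + 1)))"
    have E: "laplace_Z 1 n = real n / (real n + 1) * exp (- S)"
    proof -
      have "laplace_Z 1 n = exp (1 * ln (real n)) * (\<Prod>k=1..n. real k / (real k + real n * (exp (1 / real n) - 1)))"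
        using laplace_closed[OF n1, of 1] by simp
      also have "\<dots> = real n * (\<Prod>k=1..n. real k / (real k + 1 + eps n))"
        using npos by (simp add: eps_def)
      also have "\<dots> = real n / (real n + 1) * exp (- S)"
        unfolding prod_eps[OF e0] S_def by simp
      finally show ?thesis .
    qed
    have S0: "0 \<le> S" unfolding S_def using e0 by (intro sum_nonneg) simp
    have hs: "(\<Sum>k=1..n. eps n / (real k + 1)) = eps n * (harm (Suc n) - 1)"
    proof -
      have "(\<Sum>k=1..n. eps n / (real k + 1)) = eps n * (\<Sum>k=1..n. 1 / (real k + 1))"
        by (simp add: sum_distrib_left)
      thus ?thesis by (simp only: harm_sum)
    qed
    have SU: "S \<le> SU n"
    proof -
      have "S \<le> (\<Sum>k=1..n. eps n / (real k + 1))"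
        unfolding S_def using e0 by (intro sum_mono ln_add_one_self_le_self) simp
      also have "\<dots> = eps n * (harm (Suc n) - 1)" by (rule hs)
      also have "\<dots> \<le> eps n * ln (real n + 1)"
        using harm_upper[of n] e0 by (intro mult_left_mono) (auto simp: add.commute)
      finally show ?thesis by (simp add: SU_def)
    qed
    have SL: "SL n \<le> S"
    proof -
      have "SL n \<le> eps n * (harm (Suc n) - 1) - real n * (eps n)^2"
        using ln_le_harm[of "Suc n"] e0 unfolding SL_def
        by (intro diff_right_mono mult_left_mono) (auto simp: add.commute)
      also have "\<dots> = (\<Sum>k=1..n. eps n / (real k + 1) - (eps n)^2)"
        using hs by (simp add: sum_subtractf)
      also have "\<dots> \<le> S" unfolding S_def
      proof (intro sum_mono)
        fix k assume k: "k \<in> {1..n}"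
        have y0: "0 \<le> eps n / (real k + 1)" using e0 by simp
        have y1: "eps n / (real k + 1) \<le> eps n" using e0 by (simp add: divide_le_eq) (simp add: algebra_simps)
        hence "(eps n / (real k + 1))^2 \<le> (eps n)^2" using y0 by (intro power_mono) auto
        moreover have "eps n / (real k + 1) - (eps n / (real k + 1))^2 \<le> ln (1 + eps n / (real k + 1))"
          using y0 y1 e1 by (intro ln_one_plus_pos_lower_bound) auto
        ultimately show "eps n / (real k + 1) - (eps n)^2 \<le> ln (1 + eps n / (real k + 1))" by linarith
      qed
      finally show ?thesis .
    qed
    have lnpos: "ln (real n) > 0" using elim by simp
    have c0: "c n > 0" unfolding c_def using npos lnpos by simp
    have R: "(laplace_Z 1 n - 1) / (- ln (real n) / (2 * real n)) = (1 - laplace_Z 1 n) * c n"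
      unfolding c_def using npos lnpos by (simp add: field_simps)
    note K = key_ineq[OF E npos c0 S0 SL SU]
    show ?case unfolding R L_def U_def using K by simp
  qed
  show ?thesis by (rule tendsto_sandwich[OF eventually_mono[OF ev] eventually_mono[OF ev] L U]) auto
qed


theorem lemma4p4:
  shows "(\<forall>l::real. l \<ge> 0 \<longrightarrow> Bseq (\<lambda>n. laplace_Z l (Suc n)))
    \<and> ((\<lambda>n. (laplace_Z 1 n - 1) / (- ln (real n) / (2 * real n))) \<longlonglongrightarrow> 1)"
  using bseq_part lim_part by blast

end
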